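(* Let $\{p_\alpha\}$ be a one-parameter exponential family on $\mathbb{R}$ with canonical parameter $\alpha$, sufficient statistic $x$, base measure $p_0$, i.e. $\frac{dp_\alpha}{dp_0}(x)=\exp(\alpha x-\Phi(\alpha))$ with $\Phi(0)=0$, where $\Phi$ is smooth and finite on $\mathbb{R}$ and $\Phi''(0)\neq 0$. Consider the model in which, given $X\in\mathbb{R}_{>0}^{m\times n}$ and $u\in\mathbb{R}^m$, $v\in\mathbb{R}^n$, independently $Y_{ij}\sim p_{\alpha_{ij}}$ with $\alpha_{ij}=u_i+\log X_{ij}-v_j$, with log-likelihood $L(u,v;Y)=\sum_iu_ip_i-\sum_jv_jq_j-\sum_{ij}\Phi(u_i+w_{ij})+C(Y)$ where $p_i=\sum_jY_{ij}$, $q_j=\sum_iY_{ij}$, $w_{ij}=\log X_{ij}-v_j$. Suppose the MLE satisfies a generalized proportional fitting equation for all parameters, in the sense that there are smooth functions $f,h:\mathbb{R}\to\mathbb{R}$ with $$h(u_i)\sum_j f(w_{ij})=\sum_j\Phi'(u_i+w_{ij})\quad\text{for all } u_i\in\mathbb{R}\text{ and all } (w_{ij})_j\in\mathbb{R}^n$$ (equivalently, $\partial_{u_i}L=0$ iff $h(u_i)=p_i/\sum_jf(w_{ij})$). Then there exist constants $a,b\in\mathbb{R}$ with $\Phi(\alpha)=e^{a\alpha+b}-e^b$ for all $\alpha$; i.e. $p_\alpha$ is the law of $aZ$ with $Z\sim\mathrm{Poisson}(e^{a\alpha+b})$ (a scaled Poisson family). Conversely, scaled Poisson families satisfy such an equation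 (with $f=h=\exp$ in the unscaled case, recovering the IPF equations). *)

theory Defs
  imports "HOL-Probability.Probability"
begin

definition smooth_real :: "(real \<Rightarrow> real) \<Rightarrow> bool" where
  "smooth_real g \<longleftrightarrow> (\<forall>k x. ((deriv ^^ k) g) differentiable (at x))"

end

theory Submission
  imports Defs
begin

lemma deriv_cexp: "deriv (\<lambda>x. c * exp (a*x+d)) = (\<lambda>x. c * a * exp (a*x+d :: real))"
proof
  fix x :: real
  have "((\<lambda>x. c * exp (a*x+d)) has_real_derivative c * a * exp (a*x+d)) (at x)"
    by (auto intro!: derivative_eq_intros)
  then show "deriv (\<lambda>x. c * exp (a*x+d)) x = c * a * exp (a*x+d)"
    by (rule DERIV_imp_deriv)
qed

lemma iter_cexp: "(deriv ^^ k) (\<lambda>x. c * exp (a*x+d)) = (\<lambda>x. c * a^k * exp (a*x+d :: real))"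
proof (induction k)
  case 0 then show ?case by simp
next
  case (Suc k)
  then show ?case using deriv_cexp[of "c * a^k" a d] by (simp add: mult_ac)
qed

lemma smooth_cexp: "smooth_real (\<lambda>x. c * exp (a*x+d))"
  unfolding smooth_real_def iter_cexp
proof (intro allI)
  fix k :: nat and x :: real
  have "((\<lambda>x. c * a^k * exp (a*x+d)) has_real_derivative c * a^k * (exp (a*x+d) * a)) (at x)"
    by (auto intro!: derivative_eq_intros)
  then show "(\<lambda>x. c * a^k * exp (a*x+d)) differentiable (at x)"
    using real_differentiable_def by blast
qed

lemma AB_ge:
  fixes A B :: real
  assumes "\<And>t. B + t^2 * A \<ge> 2*t" "A \<ge> 0"
  shows "A * B \<ge> 1"
proof (cases "A = 0")
  case True
  then show ?thesis using assms(1)[of "\<bar>B\<bar>+1"] by auto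
next
  case False
  then have "A > 0" using assms(2) by auto
  have "B + (1/A)^2 * A \<ge> 2 * (1/A)" by (rule assms(1))
  then have "B \<ge> 1/A" using \<open>A>0\<close> by (simp add: power2_eq_square field_simps)
  then show ?thesis using \<open>A>0\<close> by (simp add: field_simps)
qed

theorem mainTheorem3:
  fixes p0 :: "real measure" and \<Phi> :: "real \<Rightarrow> real" and n :: nat
  assumes "prob_space p0"
    and "sets p0 = sets borel"
    and "\<And>\<alpha>. integrable p0 (\<lambda>x. exp (\<alpha> * x))"
    and "\<And>\<alpha>. \<Phi> \<alpha> = ln (\<integral>x. exp (\<alpha> * x) \<partial>p0)"
    and "smooth_real \<Phi>"
    and "(deriv ^^ 2) \<Phi> 0 \<noteq> 0"
    and "n \<ge> 1"
  shows "(\<exists>f h. smooth_real f \<and> smooth_real h \<and>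
            (\<forall>u (w :: nat \<Rightarrow> real). h u * (\<Sum>j<n. f (w j)) = (\<Sum>j<n. deriv \<Phi> (u + w j))))
         \<longleftrightarrow> (\<exists>a b. \<forall>\<alpha>. \<Phi> \<alpha> = exp (a * \<alpha> + b) - exp b)"
proof
  assume "\<exists>a b. \<forall>\<alpha>. \<Phi> \<alpha> = exp (a * \<alpha> + b) - exp b"
  then obtain a b where ab: "\<And>\<alpha>. \<Phi> \<alpha> = exp (a * \<alpha> + b) - exp b" by blast
  have dP: "deriv \<Phi> x = a * exp (a*x+b)" for x
  proof -
    have "(\<Phi> has_real_derivative a * exp (a*x+b)) (at x)"
      unfolding ab[abs_def] by (auto intro!: derivative_eq_intros)
    then show ?thesis by (rule DERIV_imp_deriv)
  qed
  show "\<exists>f h. smooth_real f \<and> smooth_real h \<and>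
            (\<forall>u (w :: nat \<Rightarrow> real). h u * (\<Sum>j<n. f (w j)) = (\<Sum>j<n. deriv \<Phi> (u + w j)))"
  proof (intro exI conjI allI)
    show "smooth_real (\<lambda>x. 1 * exp (a*x+0))" by (rule smooth_cexp)
    show "smooth_real (\<lambda>x. a * exp (a*x+b))" by (rule smooth_cexp)
    fix u and w :: "nat \<Rightarrow> real"
    show "a * exp (a*u+b) * (\<Sum>j<n. 1 * exp (a * w j + 0)) = (\<Sum>j<n. deriv \<Phi> (u + w j))"
      unfolding dP sum_distrib_left
      by (rule sum.cong) (auto simp: exp_add[symmetric] algebra_simps)
  qed
next
  assume "\<exists>f h. smooth_real f \<and> smooth_real h \<and>
            (\<forall>u (w :: nat \<Rightarrow> real). h u * (\<Sum>j<n. f (w j)) = (\<Sum>j<n. deriv \<Phi> (u + w j)))"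
  then obtain f h where fh: "\<And>u (w :: nat \<Rightarrow> real). h u * (\<Sum>j<n. f (w j)) = (\<Sum>j<n. deriv \<Phi> (u + w j))"
    by blast
  interpret P: prob_space p0 by fact
  define g where "g = deriv \<Phi>"
  have hf: "h u * f t = g (u+t)" for u t
  proof -
    have "h u * (\<Sum>j<n. f ((\<lambda>_. t) j)) = (\<Sum>j<n. deriv \<Phi> (u + (\<lambda>_. t) j))" by (rule fh)
    then have "real n * (h u * f t) = real n * g (u+t)" by (simp add: g_def algebra_simps)
    then show ?thesis using assms(7) by simp
  qed
  have cauchy: "g (u+t) * g 0 = g u * g t" for u t
  proof -
    have "g (u+t) * g 0 = (h u * f t) * (h 0 * f 0)" using hf[of u t] hf[of 0 0] by simp
    also have "\<dots> = (h u * f 0) * (h 0 * f t)" by (simp add: mult_ac)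
    also have "\<dots> = g u * g t" using hf[of u 0] hf[of 0 t] by simp
    finally show ?thesis .
  qed
  have sm: "\<And>k x. ((deriv ^^ k) \<Phi>) differentiable (at x)" using assms(5) by (simp add: smooth_real_def)
  have dPhi: "(\<Phi> has_real_derivative g x) (at x)" for x
    using sm[of 0 x] by (simp add: g_def DERIV_deriv_iff_real_differentiable)
  have dg: "(g has_real_derivative deriv g x) (at x)" for x
    using sm[of 1 x] by (simp add: g_def DERIV_deriv_iff_real_differentiable)
  have g2: "deriv g 0 \<noteq> 0" using assms(6) by (simp add: g_def numeral_2_eq_2)
  define c where "c = g 0"
  have c0: "c \<noteq> 0"
  proof
    assume "c = 0"
    then have "g u = 0" for u using cauchy[of u u] by (simp add: c_def)
    then have "g = (\<lambda>_. 0)" by auto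
    then show False using g2 by simp
  qed
  define k where "k = deriv g 0 / c"
  have k0: "k \<noteq> 0" using g2 c0 by (simp add: k_def)
  have ode: "deriv g u = k * g u" for u
  proof -
    have d1: "((\<lambda>t. g (u+t) * c) has_real_derivative deriv g u * c) (at 0)"
      using dg[of u] by (auto intro!: derivative_eq_intros DERIV_chain2[of g])
    have d2: "((\<lambda>t. g u * g t) has_real_derivative g u * deriv g 0) (at 0)"
      using dg[of 0] by (auto intro!: derivative_eq_intros)
    have "(\<lambda>t. g (u+t) * c) = (\<lambda>t. g u * g t)" using cauchy by (simp add: c_def)
    then have "deriv g u * c = g u * deriv g 0" using d1 d2 DERIV_unique by metis
    then show ?thesis using c0 by (simp add: k_def field_simps)
  qed
  have gexp: "g x = c * exp (k*x)" for x
  proof -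
    have "\<forall>x. ((\<lambda>x. g x * exp (-k*x)) has_real_derivative 0) (at x)"
    proof
      fix x
      have "((\<lambda>x. g x * exp (-k*x)) has_real_derivative
              deriv g x * exp (-k*x) + g x * (exp (-k*x) * (-k))) (at x)"
        using dg[of x] by (auto intro!: derivative_eq_intros)
      then show "((\<lambda>x. g x * exp (-k*x)) has_real_derivative 0) (at x)"
        by (simp add: ode algebra_simps)
    qed
    then have "g x * exp (-k*x) = g 0 * exp (-k*0)" by (rule DERIV_isconst_all)
    then have "g x * exp (-k*x) * exp (k*x) = c * exp (k*x)" by (simp add: c_def)
    then show ?thesis by (simp add: mult.assoc exp_add[symmetric])
  qed
  have Phi0: "\<Phi> 0 = 0" using assms(4)[of 0] by (simp add: P.prob_space)
  have Phiform: "\<Phi> x = (c/k) * (exp (k*x) - 1)" for x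
  proof -
    have "\<forall>x. ((\<lambda>x. \<Phi> x - (c/k) * exp (k*x)) has_real_derivative 0) (at x)"
    proof
      fix x
      have "((\<lambda>x. \<Phi> x - (c/k) * exp (k*x)) has_real_derivative g x - (c/k) * (exp (k*x) * k)) (at x)"
        using dPhi[of x] by (auto intro!: derivative_eq_intros)
      then show "((\<lambda>x. \<Phi> x - (c/k) * exp (k*x)) has_real_derivative 0) (at x)"
        using k0 by (simp add: gexp)
    qed
    then have "\<Phi> x - (c/k) * exp (k*x) = \<Phi> 0 - (c/k) * exp (k*0)" by (rule DERIV_isconst_all)
    then show ?thesis using Phi0 by (simp add: algebra_simps)
  qed
  define A where "A = (\<integral>x. exp (1 * x) \<partial>p0)"
  define B where "B = (\<integral>x. exp ((-1) * x) \<partial>p0)"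
  have A0: "A \<ge> 0" unfolding A_def by (rule integral_nonneg_AE) auto
  have "B + t^2 * A \<ge> 2*t" for t
  proof -
    have "(\<integral>x. 2*t \<partial>p0) \<le> (\<integral>x. exp ((-1)*x) + t^2 * exp (1*x) \<partial>p0)"
    proof (rule integral_mono)
      show "integrable p0 (\<lambda>x. 2*t)" by simp
      show "integrable p0 (\<lambda>x. exp ((-1)*x) + t^2 * exp (1*x))"
        using assms(3)[of "-1"] assms(3)[of 1] by (intro Bochner_Integration.integrable_add integrable_mult_right) auto
      fix x :: real
      have y: "exp x > 0" by simp
      have "(1 - t * exp x)^2 / exp x \<ge> 0" by simp
      moreover have "(1 - t * exp x)^2 / exp x = exp (-x) + t^2 * exp x - 2*t"
        using y by (simp add: power2_eq_square field_simps exp_minus)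
      ultimately show "2*t \<le> exp ((-1)*x) + t^2 * exp (1*x)" by simp
    qed
    also have "\<dots> = B + t^2 * A" unfolding A_def B_def
      using assms(3)[of "-1"] assms(3)[of 1]
      by (subst Bochner_Integration.integral_add) (auto intro!: integrable_mult_right)
    finally show ?thesis by (simp add: P.prob_space)
  qed
  then have AB: "A * B \<ge> 1" using A0 by (intro AB_ge) auto
  have B0: "B \<ge> 0" unfolding B_def by (rule integral_nonneg_AE) auto
  have "A > 0" "B > 0" using AB A0 B0 by (auto simp: less_le)
  then have "ln A + ln B = ln (A*B)" by (simp add: ln_mult)
  moreover have "ln (A*B) \<ge> 0" using AB by simp
  moreover have "\<Phi> 1 = ln A" "\<Phi> (-1) = ln B" using assms(4)[of 1] assms(4)[of "-1"]
    by (simp_all add: A_def B_def)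
  ultimately have "\<Phi> 1 + \<Phi> (-1) \<ge> 0" by simp
  then have "(c/k) * (exp k + exp (-k) - 2) \<ge> 0" using Phiform[of 1] Phiform[of "-1"]
    by (simp add: algebra_simps)
  moreover have "exp k + exp (-k) - 2 > 0"
  proof -
    have "(exp k - 1)^2 / exp k > 0" using k0 by simp
    also have "(exp k - 1)^2 / exp k = exp k + exp (-k) - 2"
      by (simp add: power2_eq_square field_simps exp_minus)
    finally show ?thesis .
  qed
  ultimately have "c/k \<ge> 0" by (meson not_le mult_neg_pos)
  then have ck: "c/k > 0" using c0 k0 by (simp add: less_le)
  show "\<exists>a b. \<forall>\<alpha>. \<Phi> \<alpha> = exp (a * \<alpha> + b) - exp b"
  proof (intro exI allI)
    fix \<alpha>
    show "\<Phi> \<alpha> = exp (k * \<alpha> + ln (c/k)) - exp (ln (c/k))"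
      using ck by (simp add: Phiform exp_add algebra_simps)
  qed
qed

end
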